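(* Let $G$ be a compact Lie group with normalized Haar measure, let $\Gamma$ be any finite graph with vertex set $\{1,\ldots,k\}$ that is a subgraph of the complete graph on $k$ vertices (no loops or multiple edges), and assign to each edge $e=\{i,j\}$, $i<j$, a finite-dimensional unitary representation $\rho_e$ of $G$. Then the evaluation of the corresponding relativistic spin network with symmetry $G\times G$, $$\int_{G^k}\prod_{e=\{i,j\},\,i<j}\chi_{\rho_e}(g_i g_j^{-1})\,dg_1\cdots dg_k,$$ is a non-negative real number. In particular, this holds for the relativistic (Barrett–Crane) spin networks with symmetry group $\mathrm{Spin}(4)\cong SU(2)\times SU(2)$ (or $SO(4)$) on any such graph.
   Context: $\chi_\rho(g)=\mathrm{tr}\,\rho(g)$. A relativistic spin network with symmetry $G\times G$ is a graph whose edges are labeled by representations of $G\times G$ of the form $V\otimes V^\ast$ ($V$ a representation of $G$) and whose vertices are labeled by the intertwiner given by a single integration over $G$ (the integral presentation of the Barrett–Crane intertwiner, $\int_G \bigotimes_{e\ni v}\rho_e(g)\,dg$ with the edge factors $V_e$, resp. $V_e^\ast$, at the two ends of the edge); with these conventions, contracting the intertwiners along the edges yields exactly the integral displayed in the claim, where $\rho_e$ is the representation $V$ labeling edge $e$. For $G=SU(2)$, the balanced representations $V\otimes V$ of $\mathrm{Spin}(4)$ are isomorphic to $V\otimes V^\ast$. *)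

theory Defs
  imports "HOL-Analysis.Analysis" "HOL-Probability.Probability" "HOL-Algebra.Group"
    "Jordan_Normal_Form.Schur_Decomposition"
begin

definition topological_group :: "('g, 'b) monoid_scheme \<Rightarrow> 'g topology \<Rightarrow> bool" where
  "topological_group G T \<longleftrightarrow>
     group G \<and> topspace T = carrier G \<and> Hausdorff_space T \<and>
     continuous_map (prod_topology T T) T (\<lambda>p. fst p \<otimes>\<^bsub>G\<^esub> snd p) \<and>
     continuous_map T T (\<lambda>x. inv\<^bsub>G\<^esub> x)"

definition compact_group :: "('g, 'b) monoid_scheme \<Rightarrow> 'g topology \<Rightarrow> bool" where
  "compact_group G T \<longleftrightarrow> topological_group G T \<and> compact_space T"

definition unitary_rep ::
  "('g, 'b) monoid_scheme \<Rightarrow> 'g topology \<Rightarrow> nat \<Rightarrow> ('g \<Rightarrow> complex mat) \<Rightarrow> bool" where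
  "unitary_rep G T d \<rho> \<longleftrightarrow>
     (\<forall>g\<in>carrier G. \<rho> g \<in> carrier_mat d d \<and> mat_adjoint (\<rho> g) * \<rho> g = 1\<^sub>m d) \<and>
     (\<forall>g\<in>carrier G. \<forall>h\<in>carrier G. \<rho> (g \<otimes>\<^bsub>G\<^esub> h) = \<rho> g * \<rho> h) \<and>
     (\<forall>i<d. \<forall>j<d. continuous_map T euclidean (\<lambda>g. \<rho> g $$ (i, j)))"

text \<open>Compact Lie group: a compact group admitting a faithful continuous finite-dimensional
  unitary representation (equivalently, isomorphic as a topological group to a closed
  subgroup of some U(n)).\<close>
definition compact_lie_group :: "('g, 'b) monoid_scheme \<Rightarrow> 'g topology \<Rightarrow> bool" where
  "compact_lie_group G T \<longleftrightarrow>
     compact_group G T \<and> (\<exists>n \<rho>. unitary_rep G T n \<rho> \<and> inj_on \<rho> (carrier G))"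

definition normalized_haar :: "('g, 'b) monoid_scheme \<Rightarrow> 'g topology \<Rightarrow> 'g measure \<Rightarrow> bool" where
  "normalized_haar G T M \<longleftrightarrow>
     prob_space M \<and> space M = carrier G \<and>
     sets M = sigma_sets (carrier G) {U. openin T U} \<and>
     (\<forall>g\<in>carrier G. \<forall>A\<in>sets M.
        emeasure M ((\<lambda>x. g \<otimes>\<^bsub>G\<^esub> x) ` A) = emeasure M A)"

definition mat_trace :: "complex mat \<Rightarrow> complex" where
  "mat_trace A = (\<Sum>i<dim_row A. A $$ (i, i))"

definition character :: "('g \<Rightarrow> complex mat) \<Rightarrow> 'g \<Rightarrow> complex" where
  "character \<rho> g = mat_trace (\<rho> g)"

end

theory Submission
  imports Defs
begin

lemma adj_carrier: "A \<in> carrier_mat n n \<Longrightarrow> mat_adjoint A \<in> carrier_mat n n"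
  unfolding mat_adjoint_def by auto

lemma adj_index: "A \<in> carrier_mat n n \<Longrightarrow> i < n \<Longrightarrow> j < n \<Longrightarrow> mat_adjoint A $$ (i,j) = cnj (A $$ (j,i))"
  unfolding mat_adjoint_def by (auto simp: mat_of_rows_index)

lemma rep_one:
  assumes "group G" "unitary_rep G T d \<rho>"
  shows "\<rho> \<one>\<^bsub>G\<^esub> = 1\<^sub>m d"
proof -
  interpret group G by fact
  let ?P = "\<rho> \<one>\<^bsub>G\<^esub>"
  have P: "?P \<in> carrier_mat d d" "mat_adjoint ?P * ?P = 1\<^sub>m d"
    using assms(2) unfolding unitary_rep_def by auto
  have PP: "?P = ?P * ?P" using assms(2) unfolding unitary_rep_def
    by (metis one_closed l_one)
  have "1\<^sub>m d = mat_adjoint ?P * (?P * ?P)" using P PP by simp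
  also have "\<dots> = (mat_adjoint ?P * ?P) * ?P" by (rule assoc_mult_mat[symmetric, OF adj_carrier[OF P(1)] P(1) P(1)])
  also have "\<dots> = ?P" using P by simp
  finally show ?thesis by simp
qed

lemma rep_inv:
  assumes "group G" "unitary_rep G T d \<rho>" "h \<in> carrier G"
  shows "\<rho> (inv\<^bsub>G\<^esub> h) = mat_adjoint (\<rho> h)"
proof -
  interpret group G by fact
  have P: "\<rho> h \<in> carrier_mat d d" "mat_adjoint (\<rho> h) * \<rho> h = 1\<^sub>m d"
    "\<rho> (inv\<^bsub>G\<^esub> h) \<in> carrier_mat d d"
    using assms unfolding unitary_rep_def by auto
  have Q: "\<rho> h * \<rho> (inv\<^bsub>G\<^esub> h) = 1\<^sub>m d"
    using assms rep_one[OF assms(1,2)] unfolding unitary_rep_def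
    by (metis inv_closed r_inv)
  have "mat_adjoint (\<rho> h) = mat_adjoint (\<rho> h) * (\<rho> h * \<rho> (inv\<^bsub>G\<^esub> h))"
    using Q adj_carrier[OF P(1)] by simp
  also have "\<dots> = (mat_adjoint (\<rho> h) * \<rho> h) * \<rho> (inv\<^bsub>G\<^esub> h)"
    by (rule assoc_mult_mat[symmetric, OF adj_carrier[OF P(1)] P(1) P(3)])
  also have "\<dots> = \<rho> (inv\<^bsub>G\<^esub> h)" using P by simp
  finally show ?thesis by simp
qed

lemma rep_bound:
  assumes "unitary_rep G T d \<rho>" "g \<in> carrier G" "x < d" "y < d"
  shows "cmod (\<rho> g $$ (x,y)) \<le> 1"
proof -
  have P: "\<rho> g \<in> carrier_mat d d" "mat_adjoint (\<rho> g) * \<rho> g = 1\<^sub>m d"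
    using assms unfolding unitary_rep_def by auto
  have "1 = (mat_adjoint (\<rho> g) * \<rho> g) $$ (y,y)" using P assms by simp
  also have "\<dots> = (\<Sum>z<d. cnj (\<rho> g $$ (z,y)) * \<rho> g $$ (z,y))"
    using P(1) assms adj_carrier[OF P(1)]
    by (simp add: scalar_prod_def adj_index atLeast0LessThan)
  also have "\<dots> = (\<Sum>z<d. complex_of_real ((cmod (\<rho> g $$ (z,y)))^2))"
    by (intro sum.cong refl) (subst complex_norm_square, simp add: mult.commute)
  finally have "1 = (\<Sum>z<d. (cmod (\<rho> g $$ (z,y)))^2)"
    by (metis of_real_eq_1_iff of_real_sum)
  moreover have "(cmod (\<rho> g $$ (x,y)))^2 \<le> (\<Sum>z<d. (cmod (\<rho> g $$ (z,y)))^2)"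
    using assms by (intro member_le_sum) auto
  ultimately have "(cmod (\<rho> g $$ (x,y)))^2 \<le> 1" by simp
  then show ?thesis by (metis abs_norm_cancel abs_square_le_1)
qed

locale sn =
  fixes G :: "('g, 'b) monoid_scheme" and T :: "'g topology" and M :: "'g measure"
    and k :: nat and E :: "(nat \<times> nat) set"
    and d :: "nat \<times> nat \<Rightarrow> nat" and \<rho> :: "nat \<times> nat \<Rightarrow> 'g \<Rightarrow> complex mat"
  assumes tg: "topological_group G T"
    and nh: "normalized_haar G T M"
    and Esub: "E \<subseteq> {(i, j). 1 \<le> i \<and> i < j \<and> j \<le> k}"
    and reps: "\<forall>e\<in>E. unitary_rep G T (d e) (\<rho> e)"
begin

lemma grp: "group G" using tg unfolding topological_group_def by auto
lemma top: "topspace T = carrier G" using tg unfolding topological_group_def by auto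
lemma ps: "prob_space M" using nh unfolding normalized_haar_def by auto
lemma spM: "space M = carrier G" using nh unfolding normalized_haar_def by auto
lemma setsM: "sets M = sigma_sets (carrier G) {U. openin T U}" using nh unfolding normalized_haar_def by auto
lemma inv_emeas: "g \<in> carrier G \<Longrightarrow> A \<in> sets M \<Longrightarrow> emeasure M ((\<lambda>x. g \<otimes>\<^bsub>G\<^esub> x) ` A) = emeasure M A"
  using nh unfolding normalized_haar_def by auto

lemma finE: "finite E"
  by (rule finite_subset[OF Esub]) (rule finite_subset[of _ "{1..k} \<times> {1..k}"], auto)

lemma cont_meas:
  fixes f :: "'g \<Rightarrow> 'c::topological_space"
  assumes "continuous_map T euclidean f"
  shows "f \<in> borel_measurable M"
proof (rule borel_measurableI)
  fix S :: "'c set" assume "open S"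
  then have "openin T {x \<in> topspace T. f x \<in> S}"
    using assms by (simp add: continuous_map_def)
  moreover have "f -` S \<inter> space M = {x \<in> topspace T. f x \<in> S}" using spM top by auto
  ultimately show "f -` S \<inter> space M \<in> sets M" unfolding setsM by auto
qed

lemma cont_left:
  assumes "h \<in> carrier G"
  shows "continuous_map T T (\<lambda>x. h \<otimes>\<^bsub>G\<^esub> x)"
proof -
  have m: "continuous_map (prod_topology T T) T (\<lambda>p. fst p \<otimes>\<^bsub>G\<^esub> snd p)"
    using tg unfolding topological_group_def by auto
  have "continuous_map T (prod_topology T T) (\<lambda>x. (h, x))"
    using assms top by (simp add: continuous_map_paired)
  from continuous_map_compose[OF this m] show ?thesis by (simp add: o_def)
qed

lemma meas_left:
  assumes "h \<in> carrier G"
  shows "(\<lambda>x. h \<otimes>\<^bsub>G\<^esub> x) \<in> measurable M M"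
proof (rule measurable_sigma_sets[OF setsM])
  show "{U. openin T U} \<subseteq> Pow (carrier G)" using openin_subset top by auto
  show "(\<lambda>x. h \<otimes>\<^bsub>G\<^esub> x) \<in> space M \<rightarrow> carrier G"
    using assms spM grp by (auto intro: group.is_monoid monoid.m_closed)
  fix U assume "U \<in> {U. openin T U}"
  then have "openin T {x \<in> topspace T. h \<otimes>\<^bsub>G\<^esub> x \<in> U}"
    using cont_left[OF assms] by (simp add: continuous_map_def)
  moreover have "(\<lambda>x. h \<otimes>\<^bsub>G\<^esub> x) -` U \<inter> space M = {x \<in> topspace T. h \<otimes>\<^bsub>G\<^esub> x \<in> U}"
    using spM top by auto
  ultimately show "(\<lambda>x. h \<otimes>\<^bsub>G\<^esub> x) -` U \<inter> space M \<in> sets M" unfolding setsM by auto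
qed

lemma distr_left:
  assumes h: "h \<in> carrier G"
  shows "distr M M (\<lambda>x. h \<otimes>\<^bsub>G\<^esub> x) = M"
proof (rule measure_eqI)
  show "sets (distr M M (\<lambda>x. h \<otimes>\<^bsub>G\<^esub> x)) = sets M" by simp
  fix A assume "A \<in> sets (distr M M (\<lambda>x. h \<otimes>\<^bsub>G\<^esub> x))"
  then have A: "A \<in> sets M" by simp
  then have Asub: "A \<subseteq> carrier G" using sets.sets_into_space spM by blast
  interpret group G by (rule grp)
  have "(\<lambda>x. h \<otimes>\<^bsub>G\<^esub> x) -` A \<inter> space M = (\<lambda>x. inv\<^bsub>G\<^esub> h \<otimes>\<^bsub>G\<^esub> x) ` A"
  proof (intro equalityI subsetI)
    fix x assume "x \<in> (\<lambda>x. h \<otimes>\<^bsub>G\<^esub> x) -` A \<inter> space M"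
    then have x: "x \<in> carrier G" "h \<otimes>\<^bsub>G\<^esub> x \<in> A" using spM by auto
    then have "x = inv\<^bsub>G\<^esub> h \<otimes>\<^bsub>G\<^esub> (h \<otimes>\<^bsub>G\<^esub> x)"
      using h by (simp add: m_assoc[symmetric])
    then show "x \<in> (\<lambda>x. inv\<^bsub>G\<^esub> h \<otimes>\<^bsub>G\<^esub> x) ` A" using x by blast
  next
    fix x assume "x \<in> (\<lambda>x. inv\<^bsub>G\<^esub> h \<otimes>\<^bsub>G\<^esub> x) ` A"
    then obtain y where y: "y \<in> A" "x = inv\<^bsub>G\<^esub> h \<otimes>\<^bsub>G\<^esub> y" by auto
    then have "y \<in> carrier G" using Asub by auto
    then show "x \<in> (\<lambda>x. h \<otimes>\<^bsub>G\<^esub> x) -` A \<inter> space M"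
      using y h spM by (simp add: m_assoc[symmetric])
  qed
  then show "emeasure (distr M M (\<lambda>x. h \<otimes>\<^bsub>G\<^esub> x)) A = emeasure M A"
    using A h meas_left[OF h] inv_emeas[of "inv\<^bsub>G\<^esub> h" A] by (simp add: emeasure_distr)
qed

lemma integral_left:
  fixes f :: "'g \<Rightarrow> complex"
  assumes h: "h \<in> carrier G" and f: "f \<in> borel_measurable M"
  shows "(\<integral>x. f (h \<otimes>\<^bsub>G\<^esub> x) \<partial>M) = integral\<^sup>L M f"
proof -
  have "integral\<^sup>L M f = integral\<^sup>L (distr M M (\<lambda>x. h \<otimes>\<^bsub>G\<^esub> x)) f" using distr_left[OF h] by simp
  also have "\<dots> = (\<integral>x. f (h \<otimes>\<^bsub>G\<^esub> x) \<partial>M)" by (rule integral_distr[OF meas_left[OF h] f])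
  finally show ?thesis by simp
qed


definition Ei :: "nat \<Rightarrow> (nat \<times> nat) set" where
  "Ei i = {e\<in>E. fst e = i \<or> snd e = i}"
definition ent :: "nat \<Rightarrow> nat \<times> nat \<Rightarrow> 'g \<Rightarrow> nat \<Rightarrow> nat \<Rightarrow> complex" where
  "ent i e g x y = (if fst e = i then \<rho> e g $$ (x,y) else cnj (\<rho> e g $$ (x,y)))"
definition F :: "nat \<Rightarrow> (nat \<times> nat \<Rightarrow> nat) \<Rightarrow> (nat \<times> nat \<Rightarrow> nat) \<Rightarrow> 'g \<Rightarrow> complex" where
  "F i a b g = (\<Prod>e\<in>Ei i. ent i e g (a e) (b e))"
definition Rng :: "(nat \<times> nat) set \<Rightarrow> (nat \<times> nat \<Rightarrow> nat) set" where
  "Rng S = PiE S (\<lambda>e. {..<d e})"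
definition inR :: "nat \<Rightarrow> (nat \<times> nat \<Rightarrow> nat) \<Rightarrow> bool" where
  "inR i a \<longleftrightarrow> (\<forall>e\<in>Ei i. a e < d e)"

lemma finEi: "finite (Ei i)" unfolding Ei_def using finE by auto
lemma finRng: "finite S \<Longrightarrow> finite (Rng S)" unfolding Rng_def by (intro finite_PiE) auto

lemma ent_mult:
  assumes e: "e \<in> Ei i" and g: "g \<in> carrier G" and h: "h \<in> carrier G" and xy: "x < d e" "y < d e"
  shows "ent i e (g \<otimes>\<^bsub>G\<^esub> h) x y = (\<Sum>z<d e. ent i e g x z * ent i e h z y)"
proof -
  have eE: "e \<in> E" using e unfolding Ei_def by auto
  have U: "unitary_rep G T (d e) (\<rho> e)" using reps eE by auto
  have c: "\<rho> e g \<in> carrier_mat (d e) (d e)" "\<rho> e h \<in> carrier_mat (d e) (d e)"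
    using U g h unfolding unitary_rep_def by auto
  have m: "\<rho> e (g \<otimes>\<^bsub>G\<^esub> h) = \<rho> e g * \<rho> e h" using U g h unfolding unitary_rep_def by auto
  have "\<rho> e (g \<otimes>\<^bsub>G\<^esub> h) $$ (x,y) = (\<Sum>z<d e. \<rho> e g $$ (x,z) * \<rho> e h $$ (z,y))"
    using c xy unfolding m by (simp add: scalar_prod_def atLeast0LessThan)
  then show ?thesis unfolding ent_def by (simp add: cnj_sum)
qed

lemma ent_inv:
  assumes e: "e \<in> Ei i" and h: "h \<in> carrier G" and xy: "x < d e" "y < d e"
  shows "ent i e (inv\<^bsub>G\<^esub> h) x y = cnj (ent i e h y x)"
proof -
  have eE: "e \<in> E" using e unfolding Ei_def by auto
  have U: "unitary_rep G T (d e) (\<rho> e)" using reps eE by auto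
  have c: "\<rho> e h \<in> carrier_mat (d e) (d e)" using U h unfolding unitary_rep_def by auto
  show ?thesis unfolding ent_def rep_inv[OF grp U h] adj_index[OF c xy] by simp
qed

lemma ent_bound:
  assumes e: "e \<in> Ei i" and g: "g \<in> carrier G" and xy: "x < d e" "y < d e"
  shows "cmod (ent i e g x y) \<le> 1"
proof -
  have eE: "e \<in> E" using e unfolding Ei_def by auto
  have U: "unitary_rep G T (d e) (\<rho> e)" using reps eE by auto
  show ?thesis using rep_bound[OF U g xy] unfolding ent_def by simp
qed

lemma ent_meas:
  assumes e: "e \<in> Ei i" and xy: "x < d e" "y < d e"
  shows "(\<lambda>g. ent i e g x y) \<in> borel_measurable M"
proof -
  have eE: "e \<in> E" using e unfolding Ei_def by auto
  have U: "unitary_rep G T (d e) (\<rho> e)" using reps eE by auto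
  have "(\<lambda>g. \<rho> e g $$ (x,y)) \<in> borel_measurable M"
    using U xy unfolding unitary_rep_def by (intro cont_meas) auto
  moreover have "(\<lambda>g. cnj (\<rho> e g $$ (x,y))) \<in> borel_measurable M"
    by (rule borel_measurable_continuous_on[OF _ calculation]) (intro continuous_on_cnj continuous_on_id)
  ultimately show ?thesis unfolding ent_def by (cases "fst e = i") simp_all
qed

lemma F_mult:
  assumes g: "g \<in> carrier G" and h: "h \<in> carrier G" and a: "inR i a" and b: "inR i b"
  shows "F i a b (g \<otimes>\<^bsub>G\<^esub> h) = (\<Sum>c\<in>Rng (Ei i). F i a c g * F i c b h)"
proof -
  have "F i a b (g \<otimes>\<^bsub>G\<^esub> h) = (\<Prod>e\<in>Ei i. \<Sum>z<d e. ent i e g (a e) z * ent i e h z (b e))"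
    unfolding F_def using a b by (intro prod.cong refl ent_mult[OF _ g h]) (auto simp: inR_def)
  also have "\<dots> = (\<Sum>c\<in>Rng (Ei i). \<Prod>e\<in>Ei i. ent i e g (a e) (c e) * ent i e h (c e) (b e))"
    unfolding Rng_def by (rule prod_sum_PiE) (auto simp: finEi)
  also have "\<dots> = (\<Sum>c\<in>Rng (Ei i). F i a c g * F i c b h)"
    unfolding F_def by (simp add: prod.distrib)
  finally show ?thesis .
qed

lemma Rng_inR: "c \<in> Rng (Ei i) \<Longrightarrow> inR i c"
  unfolding Rng_def inR_def by auto

lemma F_inv:
  assumes h: "h \<in> carrier G" and a: "inR i a" and b: "inR i b"
  shows "F i a b (inv\<^bsub>G\<^esub> h) = cnj (F i b a h)"
  unfolding F_def cnj_prod using a b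
  by (intro prod.cong refl ent_inv[OF _ h]) (auto simp: inR_def)

lemma F_bound:
  assumes g: "g \<in> carrier G" and a: "inR i a" and b: "inR i b"
  shows "cmod (F i a b g) \<le> 1"
  unfolding F_def prod_norm[symmetric] using a b
  by (intro prod_le_1 conjI norm_ge_zero ent_bound[OF _ g]) (auto simp: inR_def)

lemma F_meas:
  assumes a: "inR i a" and b: "inR i b"
  shows "F i a b \<in> borel_measurable M"
proof -
  have "(\<lambda>g. \<Prod>e\<in>Ei i. ent i e g (a e) (b e)) \<in> borel_measurable M"
    using a b by (intro borel_measurable_prod ent_meas) (auto simp: inR_def)
  then show ?thesis unfolding F_def[abs_def] .
qed

lemma F_int:
  assumes a: "inR i a" and b: "inR i b"
  shows "integrable M (F i a b)"
proof -
  interpret prob_space M by (rule ps)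
  show ?thesis
    by (rule integrable_const_bound[where B=1]) (auto simp: spM F_bound[OF _ a b] F_meas[OF a b])
qed


definition K :: "nat \<Rightarrow> (nat \<times> nat \<Rightarrow> nat) \<Rightarrow> (nat \<times> nat \<Rightarrow> nat) \<Rightarrow> complex" where
  "K i a b = integral\<^sup>L M (F i a b)"

lemma gram:
  assumes a: "inR i a" and b: "inR i b"
  shows "K i a b = (\<Sum>c\<in>Rng (Ei i). cnj (K i c a) * K i c b)"
proof -
  interpret prob_space M by (rule ps)
  interpret group G by (rule grp)
  have "K i a b = (\<integral>h. K i a b \<partial>M)" by (simp add: prob_space)
  also have "\<dots> = (\<integral>h. (\<integral>g. F i a b (inv\<^bsub>G\<^esub> h \<otimes>\<^bsub>G\<^esub> g) \<partial>M) \<partial>M)"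
    unfolding K_def
  proof (rule Bochner_Integration.integral_cong[OF refl])
    fix h assume "h \<in> space M"
    then have hi: "inv\<^bsub>G\<^esub> h \<in> carrier G" using spM by simp
    show "integral\<^sup>L M (F i a b) = (\<integral>g. F i a b (inv\<^bsub>G\<^esub> h \<otimes>\<^bsub>G\<^esub> g) \<partial>M)"
      by (rule integral_left[OF hi F_meas[OF a b], symmetric])
  qed
  also have "\<dots> = (\<integral>h. (\<Sum>c\<in>Rng (Ei i). F i a c (inv\<^bsub>G\<^esub> h) * K i c b) \<partial>M)"
  proof (intro Bochner_Integration.integral_cong refl)
    fix h assume h: "h \<in> space M"
    then have hi: "inv\<^bsub>G\<^esub> h \<in> carrier G" using spM by simp
    have "(\<integral>g. F i a b (inv\<^bsub>G\<^esub> h \<otimes>\<^bsub>G\<^esub> g) \<partial>M)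
        = (\<integral>g. (\<Sum>c\<in>Rng (Ei i). F i a c (inv\<^bsub>G\<^esub> h) * F i c b g) \<partial>M)"
      by (intro Bochner_Integration.integral_cong refl F_mult[OF hi _ a b]) (simp add: spM)
    also have "\<dots> = (\<Sum>c\<in>Rng (Ei i). F i a c (inv\<^bsub>G\<^esub> h) * K i c b)"
      unfolding K_def
      by (subst Bochner_Integration.integral_sum) (auto intro!: integrable_mult_right F_int Rng_inR b)
    finally show "(\<integral>g. F i a b (inv\<^bsub>G\<^esub> h \<otimes>\<^bsub>G\<^esub> g) \<partial>M)
        = (\<Sum>c\<in>Rng (Ei i). F i a c (inv\<^bsub>G\<^esub> h) * K i c b)" .
  qed
  also have "\<dots> = (\<integral>h. (\<Sum>c\<in>Rng (Ei i). cnj (F i c a h) * K i c b) \<partial>M)"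
    by (intro Bochner_Integration.integral_cong refl sum.cong) (auto simp: spM F_inv[OF _ a] Rng_inR)
  also have "\<dots> = (\<Sum>c\<in>Rng (Ei i). cnj (K i c a) * K i c b)"
    unfolding K_def
    by (subst Bochner_Integration.integral_sum) (auto intro!: integrable_mult_left F_int Rng_inR a
          simp: Bochner_Integration.integral_cnj)
  finally show ?thesis .
qed


lemma char_expand:
  assumes e: "e \<in> E" and x: "x \<in> carrier G" and y: "y \<in> carrier G"
  shows "character (\<rho> e) (x \<otimes>\<^bsub>G\<^esub> inv\<^bsub>G\<^esub> y)
    = (\<Sum>p<d e. \<Sum>q<d e. \<rho> e x $$ (p,q) * cnj (\<rho> e y $$ (p,q)))"
proof -
  interpret group G by (rule grp)
  have U: "unitary_rep G T (d e) (\<rho> e)" using reps e by auto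
  have c: "\<rho> e x \<in> carrier_mat (d e) (d e)" "\<rho> e y \<in> carrier_mat (d e) (d e)"
    using U x y unfolding unitary_rep_def by auto
  have m: "\<rho> e (x \<otimes>\<^bsub>G\<^esub> inv\<^bsub>G\<^esub> y) = \<rho> e x * mat_adjoint (\<rho> e y)"
    using U x y rep_inv[OF grp U y] unfolding unitary_rep_def by auto
  have ca: "mat_adjoint (\<rho> e y) \<in> carrier_mat (d e) (d e)" by (rule adj_carrier[OF c(2)])
  show ?thesis
    unfolding character_def mat_trace_def m using c ca
    by (intro sum.cong refl) (auto simp: scalar_prod_def atLeast0LessThan adj_index[OF c(2)] intro!: sum.cong)
qed

lemma prod_double:
  fixes f :: "nat \<times> nat \<Rightarrow> nat \<Rightarrow> nat \<Rightarrow> complex"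
  shows "(\<Prod>e\<in>E. \<Sum>p<d e. \<Sum>q<d e. f e p q) = (\<Sum>a\<in>Rng E. \<Sum>b\<in>Rng E. \<Prod>e\<in>E. f e (a e) (b e))"
proof -
  have "(\<Prod>e\<in>E. \<Sum>p<d e. \<Sum>q<d e. f e p q) = (\<Sum>a\<in>Rng E. \<Prod>e\<in>E. \<Sum>q<d e. f e (a e) q)"
    unfolding Rng_def by (rule prod_sum_PiE) (auto simp: finE)
  also have "\<dots> = (\<Sum>a\<in>Rng E. \<Sum>b\<in>Rng E. \<Prod>e\<in>E. f e (a e) (b e))"
    unfolding Rng_def by (intro sum.cong refl prod_sum_PiE) (auto simp: finE)
  finally show ?thesis .
qed

lemma regroup:
  "(\<Prod>e\<in>E. \<rho> e (g (fst e)) $$ (a e, b e) * cnj (\<rho> e (g (snd e)) $$ (a e, b e)))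
    = (\<Prod>i\<in>{1..k}. F i a b (g i))"
proof -
  let ?X = "\<lambda>i e. ent i e (g i) (a e) (b e)"
  have "(\<Prod>i\<in>{1..k}. F i a b (g i)) = (\<Prod>i\<in>{1..k}. \<Prod>e\<in>E. if fst e = i \<or> snd e = i then ?X i e else 1)"
    unfolding F_def Ei_def by (rule prod.cong[OF refl]) (simp add: prod.inter_filter finE)
  also have "\<dots> = (\<Prod>e\<in>E. \<Prod>i\<in>{1..k}. if fst e = i \<or> snd e = i then ?X i e else 1)"
    by (rule prod.swap)
  also have "\<dots> = (\<Prod>e\<in>E. \<rho> e (g (fst e)) $$ (a e, b e) * cnj (\<rho> e (g (snd e)) $$ (a e, b e)))"
  proof (intro prod.cong refl)
    fix e assume e: "e \<in> E"
    then have e2: "fst e \<in> {1..k}" "snd e \<in> {1..k}" "fst e \<noteq> snd e" using Esub by auto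
    have "(\<Prod>i\<in>{1..k}. if fst e = i \<or> snd e = i then ?X i e else 1) = (\<Prod>i\<in>{1..k} \<inter> {i. fst e = i \<or> snd e = i}. ?X i e)"
      by (simp add: prod.If_cases)
    also have "{1..k} \<inter> {i. fst e = i \<or> snd e = i} = {fst e, snd e}" using e2 by auto
    also have "(\<Prod>i\<in>{fst e, snd e}. ?X i e) = ?X (fst e) e * ?X (snd e) e" using e2 by simp
    also have "\<dots> = \<rho> e (g (fst e)) $$ (a e, b e) * cnj (\<rho> e (g (snd e)) $$ (a e, b e))"
      using e2 unfolding ent_def by simp
    finally show "(\<Prod>i\<in>{1..k}. if fst e = i \<or> snd e = i then ?X i e else 1) = \<rho> e (g (fst e)) $$ (a e, b e) * cnj (\<rho> e (g (snd e)) $$ (a e, b e))" .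
  qed
  finally show ?thesis by simp
qed

lemma A_inR: "a \<in> Rng E \<Longrightarrow> inR i a"
  unfolding Rng_def inR_def Ei_def by auto


lemma main:
  "\<exists>r::real. r \<ge> 0 \<and>
    (\<integral>g. (\<Prod>e\<in>E. character (\<rho> e) (g (fst e) \<otimes>\<^bsub>G\<^esub> inv\<^bsub>G\<^esub> (g (snd e))))
       \<partial>(PiM {1..k} (\<lambda>_. M))) = complex_of_real r"
proof -
  interpret prob_space M by (rule ps)
  interpret P: product_sigma_finite "\<lambda>_. M"
    by unfold_locales
  let ?A = "Rng E"
  let ?C = "PiE {1..k} (\<lambda>i. Rng (Ei i))"
  let ?U = "\<lambda>\<gamma> a. \<Prod>i\<in>{1..k}. K i (\<gamma> i) a"
  have finA: "finite ?A" by (rule finRng[OF finE])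
  have "(\<integral>g. (\<Prod>e\<in>E. character (\<rho> e) (g (fst e) \<otimes>\<^bsub>G\<^esub> inv\<^bsub>G\<^esub> (g (snd e))))
       \<partial>(PiM {1..k} (\<lambda>_. M)))
     = (\<integral>g. (\<Sum>a\<in>?A. \<Sum>b\<in>?A. \<Prod>i\<in>{1..k}. F i a b (g i)) \<partial>(PiM {1..k} (\<lambda>_. M)))"
  proof (rule Bochner_Integration.integral_cong[OF refl])
    fix g assume "g \<in> space (PiM {1..k} (\<lambda>_. M))"
    then have g: "\<And>i. i \<in> {1..k} \<Longrightarrow> g i \<in> carrier G" by (auto simp: space_PiM spM)
    have "(\<Prod>e\<in>E. character (\<rho> e) (g (fst e) \<otimes>\<^bsub>G\<^esub> inv\<^bsub>G\<^esub> (g (snd e))))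
      = (\<Prod>e\<in>E. \<Sum>p<d e. \<Sum>q<d e. \<rho> e (g (fst e)) $$ (p,q) * cnj (\<rho> e (g (snd e)) $$ (p,q)))"
      by (intro prod.cong refl char_expand g) (use Esub in auto)
    also have "\<dots> = (\<Sum>a\<in>?A. \<Sum>b\<in>?A. \<Prod>e\<in>E. \<rho> e (g (fst e)) $$ (a e, b e) * cnj (\<rho> e (g (snd e)) $$ (a e, b e)))"
      by (rule prod_double)
    also have "\<dots> = (\<Sum>a\<in>?A. \<Sum>b\<in>?A. \<Prod>i\<in>{1..k}. F i a b (g i))"
      by (simp add: regroup)
    finally show "(\<Prod>e\<in>E. character (\<rho> e) (g (fst e) \<otimes>\<^bsub>G\<^esub> inv\<^bsub>G\<^esub> (g (snd e))))
      = (\<Sum>a\<in>?A. \<Sum>b\<in>?A. \<Prod>i\<in>{1..k}. F i a b (g i))" .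
  qed
  also have "\<dots> = (\<Sum>a\<in>?A. \<Sum>b\<in>?A. \<integral>g. (\<Prod>i\<in>{1..k}. F i a b (g i)) \<partial>(PiM {1..k} (\<lambda>_. M)))"
  proof -
    have int: "integrable (PiM {1..k} (\<lambda>_. M)) (\<lambda>g. \<Prod>i\<in>{1..k}. F i a b (g i))"
      if "a \<in> ?A" "b \<in> ?A" for a b
      by (rule P.product_integrable_prod) (auto intro: F_int A_inR that)
    have "(\<integral>g. (\<Sum>a\<in>?A. \<Sum>b\<in>?A. \<Prod>i\<in>{1..k}. F i a b (g i)) \<partial>(PiM {1..k} (\<lambda>_. M)))
      = (\<Sum>a\<in>?A. \<integral>g. (\<Sum>b\<in>?A. \<Prod>i\<in>{1..k}. F i a b (g i)) \<partial>(PiM {1..k} (\<lambda>_. M)))"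
      by (rule Bochner_Integration.integral_sum) (rule Bochner_Integration.integrable_sum, blast intro: int)
    also have "\<dots> = (\<Sum>a\<in>?A. \<Sum>b\<in>?A. \<integral>g. (\<Prod>i\<in>{1..k}. F i a b (g i)) \<partial>(PiM {1..k} (\<lambda>_. M)))"
      by (intro sum.cong refl Bochner_Integration.integral_sum int)
    finally show ?thesis .
  qed
  also have "\<dots> = (\<Sum>a\<in>?A. \<Sum>b\<in>?A. \<Prod>i\<in>{1..k}. K i a b)"
    unfolding K_def by (intro sum.cong refl P.product_integral_prod) (auto intro: F_int A_inR)
  also have "\<dots> = (\<Sum>a\<in>?A. \<Sum>b\<in>?A. \<Prod>i\<in>{1..k}. \<Sum>c\<in>Rng (Ei i). cnj (K i c a) * K i c b)"
    by (intro sum.cong refl prod.cong gram A_inR)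
  also have "\<dots> = (\<Sum>a\<in>?A. \<Sum>b\<in>?A. \<Sum>\<gamma>\<in>?C. \<Prod>i\<in>{1..k}. cnj (K i (\<gamma> i) a) * K i (\<gamma> i) b)"
    by (intro sum.cong refl prod_sum_PiE) (auto intro: finRng finEi)
  also have "\<dots> = (\<Sum>a\<in>?A. \<Sum>b\<in>?A. \<Sum>\<gamma>\<in>?C. cnj (?U \<gamma> a) * ?U \<gamma> b)"
    by (simp add: prod.distrib cnj_prod)
  also have "\<dots> = (\<Sum>a\<in>?A. \<Sum>\<gamma>\<in>?C. \<Sum>b\<in>?A. cnj (?U \<gamma> a) * ?U \<gamma> b)"
    by (intro sum.cong refl) (rule sum.swap)
  also have "\<dots> = (\<Sum>\<gamma>\<in>?C. \<Sum>a\<in>?A. \<Sum>b\<in>?A. cnj (?U \<gamma> a) * ?U \<gamma> b)"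
    by (rule sum.swap)
  also have "\<dots> = (\<Sum>\<gamma>\<in>?C. complex_of_real ((cmod (\<Sum>a\<in>?A. ?U \<gamma> a))^2))"
  proof (intro sum.cong refl)
    fix \<gamma>
    have "(\<Sum>a\<in>?A. \<Sum>b\<in>?A. cnj (?U \<gamma> a) * ?U \<gamma> b) = cnj (\<Sum>a\<in>?A. ?U \<gamma> a) * (\<Sum>b\<in>?A. ?U \<gamma> b)"
      by (simp add: sum_product cnj_sum)
    also have "\<dots> = complex_of_real ((cmod (\<Sum>a\<in>?A. ?U \<gamma> a))^2)"
      by (subst complex_norm_square, simp add: mult.commute)
    finally show "(\<Sum>a\<in>?A. \<Sum>b\<in>?A. cnj (?U \<gamma> a) * ?U \<gamma> b) = complex_of_real ((cmod (\<Sum>a\<in>?A. ?U \<gamma> a))^2)" .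
  qed
  also have "\<dots> = complex_of_real (\<Sum>\<gamma>\<in>?C. (cmod (\<Sum>a\<in>?A. ?U \<gamma> a))^2)" by simp
  finally show ?thesis by (intro exI[of _ "\<Sum>\<gamma>\<in>?C. (cmod (\<Sum>a\<in>?A. ?U \<gamma> a))^2"] conjI sum_nonneg) auto
qed

end

theorem corollary1:
  fixes G :: "('g, 'b) monoid_scheme" and T :: "'g topology" and M :: "'g measure"
    and k :: nat and E :: "(nat \<times> nat) set"
    and d :: "nat \<times> nat \<Rightarrow> nat" and \<rho> :: "nat \<times> nat \<Rightarrow> 'g \<Rightarrow> complex mat"
  assumes "compact_lie_group G T"
    and "normalized_haar G T M"
    and "E \<subseteq> {(i, j). 1 \<le> i \<and> i < j \<and> j \<le> k}"
    and "\<forall>e\<in>E. unitary_rep G T (d e) (\<rho> e)"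
  shows "\<exists>r::real. r \<ge> 0 \<and>
    (\<integral>g. (\<Prod>e\<in>E. character (\<rho> e) (g (fst e) \<otimes>\<^bsub>G\<^esub> inv\<^bsub>G\<^esub> (g (snd e))))
       \<partial>(PiM {1..k} (\<lambda>_. M))) = complex_of_real r"
proof -
  have "topological_group G T" using assms(1) unfolding compact_lie_group_def compact_group_def by auto
  then interpret sn G T M k E d \<rho> using assms by unfold_locales auto
  show ?thesis by (rule main)
qed

end
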